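(* Let $Q$ be a uniquely $2$-divisible commutative A-loop, and define $x\circ y = \big(x^{-1}\backslash (xy^2)\big)^{1/2}$, where $z^{1/2}$ denotes the unique $w\in Q$ with $w^2=z$. Then $(Q,\circ)$ is a (left) Bruck loop, and powers in $Q$ coincide with powers in $(Q,\circ)$.
   Context: A loop is a set with a binary operation and neutral element $1$ in which all left and right translations are bijections; $\mathrm{Inn}(Q)$ is the stabilizer of $1$ in the group generated by all translations. A commutative A-loop is a commutative loop all of whose inner mappings are automorphisms. $x\backslash y$ is the unique $z$ with $xz=y$, $x^{-1}=x\backslash 1$. A loop is uniquely $2$-divisible if $x\mapsto x^2$ is a bijection. A left Bruck loop is a loop satisfying the left Bol identity $x\circ(y\circ(x\circ z)) = (x\circ(y\circ x))\circ z$ and the automorphic inverse property $(x\circ y)^{-1}=x^{-1}\circ y^{-1}$. Powers are $x^n=1L_x^n$ with $L_x$ the left translation of the respective operation. *)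

theory Defs
  imports Main
begin

definition loop :: "('a \<Rightarrow> 'a \<Rightarrow> 'a) \<Rightarrow> 'a \<Rightarrow> bool" where
  "loop m e \<longleftrightarrow> (\<forall>x. m e x = x \<and> m x e = x)
     \<and> (\<forall>x. bij (\<lambda>y. m x y)) \<and> (\<forall>x. bij (\<lambda>y. m y x))"

definition ltrans :: "('a \<Rightarrow> 'a \<Rightarrow> 'a) \<Rightarrow> 'a \<Rightarrow> 'a \<Rightarrow> 'a" where
  "ltrans m x = (\<lambda>y. m x y)"

definition rtrans :: "('a \<Rightarrow> 'a \<Rightarrow> 'a) \<Rightarrow> 'a \<Rightarrow> 'a \<Rightarrow> 'a" where
  "rtrans m x = (\<lambda>y. m y x)"

inductive_set mlt :: "('a \<Rightarrow> 'a \<Rightarrow> 'a) \<Rightarrow> ('a \<Rightarrow> 'a) set" for m where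
  mlt_id: "id \<in> mlt m"
| mlt_L: "ltrans m x \<in> mlt m"
| mlt_R: "rtrans m x \<in> mlt m"
| mlt_inv: "f \<in> mlt m \<Longrightarrow> inv f \<in> mlt m"
| mlt_comp: "f \<in> mlt m \<Longrightarrow> g \<in> mlt m \<Longrightarrow> f \<circ> g \<in> mlt m"

definition inn :: "('a \<Rightarrow> 'a \<Rightarrow> 'a) \<Rightarrow> 'a \<Rightarrow> ('a \<Rightarrow> 'a) set" where
  "inn m e = {f \<in> mlt m. f e = e}"

definition automorphism :: "('a \<Rightarrow> 'a \<Rightarrow> 'a) \<Rightarrow> ('a \<Rightarrow> 'a) \<Rightarrow> bool" where
  "automorphism m f \<longleftrightarrow> bij f \<and> (\<forall>x y. f (m x y) = m (f x) (f y))"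

definition commutative_A_loop :: "('a \<Rightarrow> 'a \<Rightarrow> 'a) \<Rightarrow> 'a \<Rightarrow> bool" where
  "commutative_A_loop m e \<longleftrightarrow> loop m e \<and> (\<forall>x y. m x y = m y x)
     \<and> (\<forall>f \<in> inn m e. automorphism m f)"

definition uniquely_2_divisible :: "('a \<Rightarrow> 'a \<Rightarrow> 'a) \<Rightarrow> bool" where
  "uniquely_2_divisible m \<longleftrightarrow> bij (\<lambda>x. m x x)"

definition ldiv :: "('a \<Rightarrow> 'a \<Rightarrow> 'a) \<Rightarrow> 'a \<Rightarrow> 'a \<Rightarrow> 'a" where
  "ldiv m x y = (THE z. m x z = y)"

definition linv :: "('a \<Rightarrow> 'a \<Rightarrow> 'a) \<Rightarrow> 'a \<Rightarrow> 'a \<Rightarrow> 'a" where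
  "linv m e x = ldiv m x e"

definition sqrt_l :: "('a \<Rightarrow> 'a \<Rightarrow> 'a) \<Rightarrow> 'a \<Rightarrow> 'a" where
  "sqrt_l m z = (THE w. m w w = z)"

definition circ_op :: "('a \<Rightarrow> 'a \<Rightarrow> 'a) \<Rightarrow> 'a \<Rightarrow> 'a \<Rightarrow> 'a \<Rightarrow> 'a" where
  "circ_op m e x y = sqrt_l m (ldiv m (linv m e x) (m x (m y y)))"

definition left_bruck_loop :: "('a \<Rightarrow> 'a \<Rightarrow> 'a) \<Rightarrow> 'a \<Rightarrow> bool" where
  "left_bruck_loop m e \<longleftrightarrow> loop m e
     \<and> (\<forall>x y z. m x (m y (m x z)) = m (m x (m y x)) z)
     \<and> (\<forall>x y. linv m e (m x y) = m (linv m e x) (linv m e y))"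

definition lpow :: "('a \<Rightarrow> 'a \<Rightarrow> 'a) \<Rightarrow> 'a \<Rightarrow> 'a \<Rightarrow> int \<Rightarrow> 'a" where
  "lpow m e x n = (if 0 \<le> n then (ltrans m x ^^ nat n) e
                   else (inv (ltrans m x) ^^ nat (- n)) e)"

end

theory Submission
  imports Defs
begin


lemma lpow_char_pos: assumes "\<And>k. f (g k) = g (k + 1)" "g 0 = a"
  shows "(f ^^ j) a = g (int j)"
  by (induction j) (simp_all add: assms add.commute)

lemma lpow_char_neg: assumes "bij f" "\<And>k. f (g k) = g (k + 1)" "g 0 = a"
  shows "(inv f ^^ j) a = g (- int j)"
proof (induction j)
  case 0 then show ?case using assms by simp
next
  case (Suc j)
  have "f (g (- int j - 1)) = g (- int j)" using assms(2)[of "- int j - 1"] by simp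
  then have "inv f (g (- int j)) = g (- int j - 1)"
    using assms(1) by (intro inv_f_eq) (auto simp: bij_def)
  moreover have "- int (Suc j) = - int j - 1" by simp
  ultimately show ?case using Suc by (simp only: funpow.simps comp_def)
qed

lemma lpow_char: assumes "bij f" "\<And>k. f (g k) = g (k + 1)" "g 0 = a"
  shows "(if 0 \<le> n then (f ^^ nat n) a else (inv f ^^ nat (-n)) a) = g n"
  using lpow_char_pos[of f g a, OF assms(2,3)] lpow_char_neg[OF assms] by simp

locale cal =
  fixes m :: "'a \<Rightarrow> 'a \<Rightarrow> 'a" (infixl "\<otimes>" 70) and e :: 'a
  assumes CAL: "commutative_A_loop m e" and U2: "uniquely_2_divisible m"
begin

abbreviation ld (infixl "\<setminus>" 70) where "a \<setminus> b \<equiv> ldiv m a b"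
abbreviation iv where "iv a \<equiv> linv m e a"

lemma lp: "loop m e" using CAL unfolding commutative_A_loop_def by blast
lemma comm: "a \<otimes> b = b \<otimes> a" using CAL unfolding commutative_A_loop_def by blast
lemma lid[simp]: "e \<otimes> a = a" using lp unfolding loop_def by blast
lemma rid[simp]: "a \<otimes> e = a" using lp unfolding loop_def by blast
lemma bijL: "bij (\<lambda>y. a \<otimes> y)" using lp unfolding loop_def by blast
lemma aut: "f \<in> inn m e \<Longrightarrow> f (a \<otimes> b) = f a \<otimes> f b"
  using CAL unfolding commutative_A_loop_def automorphism_def by blast

lemma ex1L: "\<exists>!z. a \<otimes> z = b"
proof -
  have i: "inj (\<lambda>y. a \<otimes> y)" and s: "surj (\<lambda>y. a \<otimes> y)" using bijL[of a] by (auto simp: bij_def)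
  from surjD[OF s, of b] obtain z where z: "b = a \<otimes> z" by blast
  moreover have "a \<otimes> z' = b \<Longrightarrow> z' = z" for z' using injD[OF i, of z' z] z by simp
  ultimately show ?thesis by blast
qed

lemma ld1[simp]: "a \<otimes> (a \<setminus> b) = b"
  unfolding ldiv_def by (rule theI') (rule ex1L)
lemma lcan: "a \<otimes> x = a \<otimes> y \<Longrightarrow> x = y"
  using bijL[of a] unfolding bij_def inj_def by blast
lemma ld2[simp]: "a \<setminus> (a \<otimes> b) = b"
  by (rule lcan[of a]) simp
lemma ld_eq: "a \<otimes> x = b \<Longrightarrow> a \<setminus> b = x" using ld2[of a x] by simp

lemma lcan_iff[simp]: "a \<otimes> x = a \<otimes> y \<longleftrightarrow> x = y" by (auto dest: lcan)
lemma rcan_iff[simp]: "x \<otimes> a = y \<otimes> a \<longleftrightarrow> x = y"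
  by (subst (1 2) comm) simp

lemma iv_def': "iv a = a \<setminus> e" unfolding linv_def by simp
lemma iv_r[simp]: "a \<otimes> iv a = e" unfolding iv_def' by simp
lemma iv_l[simp]: "iv a \<otimes> a = e" using iv_r comm by metis
lemma iviv[simp]: "iv (iv a) = a" unfolding iv_def' by (rule ld_eq) (metis iv_l iv_def')
lemma ive[simp]: "iv e = e" unfolding iv_def' by (rule ld_eq) simp
lemma ld_self[simp]: "a \<setminus> a = e" by (rule ld_eq) simp
lemma ld_e[simp]: "e \<setminus> a = a" by (rule ld_eq) simp

lemma inv_ltrans: "inv (ltrans m a) = (\<lambda>z. a \<setminus> z)"
proof
  fix z
  have "inj (ltrans m a)" using bijL[of a] unfolding ltrans_def bij_def by simp
  then show "inv (ltrans m a) z = a \<setminus> z"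
    by (intro inv_f_eq) (simp add: ltrans_def)+
qed

lemma mltL: "(\<lambda>z. a \<otimes> z) \<in> mlt m"
  using mlt.mlt_L[of m a] unfolding ltrans_def by simp
lemma mltD: "(\<lambda>z. a \<setminus> z) \<in> mlt m"
  using mlt.mlt_inv[OF mlt.mlt_L[of m a]] unfolding inv_ltrans by simp
lemma mltC: "f \<in> mlt m \<Longrightarrow> g \<in> mlt m \<Longrightarrow> (\<lambda>z. f (g z)) \<in> mlt m"
  using mlt.mlt_comp[of f m g] unfolding comp_def by simp

lemma innI: "f \<in> mlt m \<Longrightarrow> f e = e \<Longrightarrow> f \<in> inn m e"
  unfolding inn_def by simp

lemma aut_iv: assumes "f \<in> inn m e" shows "f (iv a) = iv (f a)"
proof -
  have fe: "f e = e" using assms unfolding inn_def by simp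
  have "f a \<otimes> f (iv a) = e" using aut[OF assms, of a "iv a"] fe by simp
  then show ?thesis unfolding iv_def' by (metis ld2)
qed

lemma aut_ld: assumes "f \<in> inn m e" shows "f (a \<setminus> b) = f a \<setminus> f b"
  using aut[OF assms, of a "a \<setminus> b"] by (metis ld1 ld2)

lemma th_inn: "(\<lambda>z. (x \<otimes> y) \<setminus> (x \<otimes> (y \<otimes> z))) \<in> inn m e"
  by (rule innI, rule mltC[OF mltD], rule mltC[OF mltL mltL]) simp

lemma aip_pre: "iv x = iv (x \<otimes> y) \<otimes> iv ((x \<otimes> y) \<setminus> x)"
proof -
  define f where "f = (\<lambda>z. (x \<otimes> y) \<setminus> (x \<otimes> (y \<otimes> z)))"
  have fi: "f \<in> inn m e" unfolding f_def by (rule th_inn)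
  have "x \<otimes> (y \<otimes> x) = (x \<otimes> y) \<otimes> x" using comm[of x "y \<otimes> x"] comm[of y x] by simp
  then have fx: "f x = x" unfolding f_def by simp
  have fivx: "f (iv x) = iv x" using aut_iv[OF fi, of x] fx by simp
  have fivy: "f (iv y) = (x \<otimes> y) \<setminus> x" unfolding f_def by simp
  have fy: "f y = iv ((x \<otimes> y) \<setminus> x)" using aut_iv[OF fi, of "iv y"] fivy by simp
  have f3: "f (y \<setminus> iv x) = iv (x \<otimes> y)" unfolding f_def by (simp add: iv_def')
  have "(y \<setminus> iv x) \<otimes> y = iv x" using comm[of y] ld1 by metis
  then have "iv x = f ((y \<setminus> iv x) \<otimes> y)" using fivx by simp
  also have "\<dots> = iv (x \<otimes> y) \<otimes> iv ((x \<otimes> y) \<setminus> x)" using aut[OF fi] f3 fy by simp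
  finally show ?thesis .
qed

lemma aip: "iv (a \<otimes> b) = iv a \<otimes> iv b"
proof -
  have "\<And>u a. iv u = iv a \<otimes> iv (a \<setminus> u)" using aip_pre ld1 by metis
  from this[of "a \<otimes> b" a] show ?thesis by simp
qed

lemma iv_ld: "iv (a \<setminus> b) = iv a \<setminus> iv b"
  by (rule sym, rule ld_eq) (simp add: aip[symmetric])

lemma ivcan: "iv a = iv b \<longleftrightarrow> a = b" using iviv by metis

lemma M_inn: "(\<lambda>z. iv x \<otimes> (x \<otimes> z)) \<in> inn m e"
  by (rule innI, rule mltC[OF mltL mltL]) simp

lemma Mx: "iv x \<otimes> (x \<otimes> x) = x"
proof -
  define f where "f = (\<lambda>z. iv x \<otimes> (x \<otimes> z))"
  have fi: "f \<in> inn m e" unfolding f_def by (rule M_inn)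
  have "f (iv x) = iv x" unfolding f_def by simp
  moreover have "f (iv x) = iv (f x)" by (rule aut_iv[OF fi])
  ultimately show ?thesis unfolding f_def by (metis iviv)
qed

lemma Lcomm: "x \<otimes> (iv x \<otimes> w) = iv x \<otimes> (x \<otimes> w)"
proof -
  define f where "f = (\<lambda>z. iv x \<otimes> (x \<otimes> z))"
  have fi: "f \<in> inn m e" unfolding f_def by (rule M_inn)
  have "f (iv x \<otimes> w) = f (iv x) \<otimes> f w" by (rule aut[OF fi])
  also have "f (iv x) = iv x" unfolding f_def by simp
  finally show ?thesis unfolding f_def by simp
qed

definition P where "P a v = a \<otimes> (iv a \<setminus> v)"

lemma P_alt: "iv a \<setminus> (a \<otimes> v) = P a v"
  unfolding P_def by (rule ld_eq) (simp add: Lcomm[symmetric])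

lemma P_inv1[simp]: "P a (P (iv a) v) = v"
  unfolding P_def by simp
lemma P_inv2[simp]: "P (iv a) (P a v) = v"
  using P_inv1[of "iv a"] by simp
lemma P_e[simp]: "P a e = a \<otimes> a"
  unfolding P_def by (simp add: iv_def'[symmetric])
lemma P_at_e[simp]: "P e v = v" unfolding P_def by simp
lemma P_iv: "iv (P a v) = P (iv a) (iv v)"
  unfolding P_def by (simp add: aip iv_ld)
lemma P_inj: "P a v = P a w \<longleftrightarrow> v = w" by (metis P_inv2)

lemma B1: "P x (P y (P x v)) = P (P x y) v"
proof -
  define c where "c = P x y"
  define g where "g = (\<lambda>z. x \<otimes> (iv x \<setminus> (y \<otimes> z)))"
  define h where "h = (\<lambda>z. c \<setminus> g z)"
  have gc: "g e = c" unfolding g_def c_def P_def by simp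
  have hi: "h \<in> inn m e" unfolding h_def g_def
    by (rule innI, rule mltC[OF mltD], rule mltC[OF mltL], rule mltC[OF mltD], rule mltL)
       (simp add: c_def P_def)
  have gh: "g z = c \<otimes> h z" for z unfolding h_def by simp
  have star: "iv x \<otimes> (x \<setminus> (iv y \<otimes> z)) = iv c \<otimes> h z" for z
  proof -
    have "iv (g (iv z)) = iv x \<otimes> (x \<setminus> (iv y \<otimes> z))"
      unfolding g_def by (simp add: aip iv_ld)
    moreover have "iv (g (iv z)) = iv c \<otimes> h z"
      unfolding gh by (simp add: aip aut_iv[OF hi])
    ultimately show ?thesis by simp
  qed
  define z where "z = iv y \<setminus> (x \<otimes> (iv x \<setminus> v))"
  have "iv x \<otimes> (x \<setminus> (iv y \<otimes> z)) = v" unfolding z_def by simp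
  then have hz: "h z = iv c \<setminus> v" using star[of z] by (metis ld2)
  have "P c v = g z" unfolding P_def gh hz by simp
  also have "g z = P x (P y (P x v))" unfolding g_def z_def P_def by simp
  finally show ?thesis unfolding c_def by simp
qed

lemma B1e: "P (P u y) e = P u (P y (u \<otimes> u))"
  using B1[of u y e] by simp

abbreviation sq where "sq z \<equiv> sqrt_l m z"

lemma ex1S: "\<exists>!w. w \<otimes> w = z"
proof -
  have i: "inj (\<lambda>y. y \<otimes> y)" and s: "surj (\<lambda>y. y \<otimes> y)" using U2
    unfolding uniquely_2_divisible_def by (auto simp: bij_def)
  from surjD[OF s, of z] obtain w where w: "z = w \<otimes> w" by blast
  moreover have "w' \<otimes> w' = z \<Longrightarrow> w' = w" for w' using injD[OF i, of w' w] w by simp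
  ultimately show ?thesis by blast
qed

lemma sq1[simp]: "sq z \<otimes> sq z = z"
  unfolding sqrt_l_def by (rule theI') (rule ex1S)
lemma sq_inj: "a \<otimes> a = b \<otimes> b \<Longrightarrow> a = b" using ex1S by blast
lemma sq2[simp]: "sq (w \<otimes> w) = w" by (rule sq_inj) simp
lemma sq_eq: "w \<otimes> w = z \<Longrightarrow> sq z = w" using sq2 by blast

abbreviation co where "co x y \<equiv> circ_op m e x y"

lemma co_def': "co x y = sq (P x (y \<otimes> y))"
  unfolding circ_op_def P_alt by simp
lemma co_sq[simp]: "co x y \<otimes> co x y = P x (y \<otimes> y)"
  unfolding co_def' by simp
lemma co_eq: "w \<otimes> w = P x (y \<otimes> y) \<Longrightarrow> co x y = w"
  unfolding co_def' by (rule sq_eq)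

lemma co_e1[simp]: "co e y = y" unfolding co_def' by simp
lemma co_e2[simp]: "co x e = x" unfolding co_def' by simp

lemma co_injL: "co x y1 = co x y2 \<Longrightarrow> y1 = y2"
proof -
  assume "co x y1 = co x y2"
  then have "co x y1 \<otimes> co x y1 = co x y2 \<otimes> co x y2" by simp
  then have "P x (y1 \<otimes> y1) = P x (y2 \<otimes> y2)" by (simp only: co_sq)
  then have "y1 \<otimes> y1 = y2 \<otimes> y2" by (simp only: P_inj)
  then show ?thesis by (rule sq_inj)
qed

lemma co_bijL: "bij (\<lambda>y. co x y)"
proof (rule bijI)
  show "inj (\<lambda>y. co x y)" by (rule injI) (rule co_injL)
  show "surj (\<lambda>y. co x y)"
  proof (rule surjI)
    fix d
    show "co x (sq (P (iv x) (d \<otimes> d))) = d" by (rule co_eq) simp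
  qed
qed

lemma co_injR: "co y1 x = co y2 x \<Longrightarrow> y1 = y2"
proof -
  assume "co y1 x = co y2 x"
  then have "co y1 x \<otimes> co y1 x = co y2 x \<otimes> co y2 x" by simp
  then have "P y1 (x \<otimes> x) = P y2 (x \<otimes> x)" by (simp only: co_sq)
  moreover have "P x y1 \<otimes> P x y1 = P x (P y1 (x \<otimes> x))" using B1e[of x y1] by simp
  moreover have "P x y2 \<otimes> P x y2 = P x (P y2 (x \<otimes> x))" using B1e[of x y2] by simp
  ultimately have "P x y1 \<otimes> P x y1 = P x y2 \<otimes> P x y2" by simp
  then have "P x y1 = P x y2" by (rule sq_inj)
  then show ?thesis by (simp add: P_inj)
qed

lemma co_bijR: "bij (\<lambda>y. co y x)"
proof (rule bijI)
  show "inj (\<lambda>y. co y x)" by (rule injI) (rule co_injR)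
  show "surj (\<lambda>y. co y x)"
  proof (rule surjI)
    fix d
    define r where "r = sq (P x (d \<otimes> d))"
    have "P (P (iv x) r) (x \<otimes> x) = P (iv x) (P r (P (iv x) (x \<otimes> x)))"
      using B1[of "iv x" r "x \<otimes> x"] by simp
    also have "P (iv x) (x \<otimes> x) = e" using P_inv2[of x e] by simp
    finally have "P (P (iv x) r) (x \<otimes> x) = d \<otimes> d" unfolding r_def by simp
    then show "co (P (iv x) r) x = d" by (intro co_eq) simp
  qed
qed

lemma co_loop: "loop (circ_op m e) e"
  unfolding loop_def using co_bijL co_bijR by simp

lemma co_bol: "co x (co y (co x z)) = co (co x (co y x)) z"
proof -
  have p: "co x (co y x) = P x y"
    by (rule sym, rule sq_inj) (simp, metis B1e P_e)
  show ?thesis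
    by (rule sq_inj) (simp add: p B1)
qed

lemma co_linv: "linv (circ_op m e) e x = iv x"
proof -
  have 1: "co x (iv x) = e"
    by (rule co_eq) (simp add: P_def)
  have 2: "co x z = e \<Longrightarrow> z = iv x" for z
    using co_injL[of x z "iv x"] 1 by simp
  show ?thesis unfolding linv_def[of "circ_op m e"] ldiv_def[of "circ_op m e"] using 1 2 by (rule the_equality)
qed

lemma co_aip: "iv (co x y) = co (iv x) (iv y)"
proof (rule sym, rule co_eq)
  have "iv (co x y) \<otimes> iv (co x y) = iv (co x y \<otimes> co x y)" by (simp only: aip)
  also have "\<dots> = iv (P x (y \<otimes> y))" by (simp only: co_sq)
  also have "\<dots> = P (iv x) (iv y \<otimes> iv y)" by (simp add: P_iv aip)
  finally show "iv (co x y) \<otimes> iv (co x y) = P (iv x) (iv y \<otimes> iv y)" .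
qed

lemma co_bruck: "left_bruck_loop (circ_op m e) e"
  unfolding left_bruck_loop_def co_linv using co_loop co_bol co_aip by simp

abbreviation pw where "pw x k \<equiv> lpow m e x k"

lemma pw_0[simp]: "pw x 0 = e" unfolding lpow_def by simp

lemma pw_S: "x \<otimes> pw x k = pw x (k + 1)"
proof (cases "0 \<le> k")
  case True
  then have "nat (k + 1) = Suc (nat k)" by simp
  then show ?thesis using True unfolding lpow_def by (simp add: ltrans_def)
next
  case False
  define j where "j = nat (- k - 1)"
  have k: "k + 1 = - int j" using False unfolding j_def by simp
  have nk: "nat (- k) = Suc j" using False unfolding j_def by simp
  have A: "pw x (k + 1) = (inv (ltrans m x) ^^ j) e"
  proof (cases "j = 0")
    case True then show ?thesis using k unfolding lpow_def by simp
  next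
    case False then show ?thesis using k unfolding lpow_def by simp
  qed
  have B: "pw x k = inv (ltrans m x) ((inv (ltrans m x) ^^ j) e)"
    using False nk unfolding lpow_def by simp
  have "bij (ltrans m x)" using bijL[of x] unfolding ltrans_def .
  then have C: "ltrans m x (inv (ltrans m x) w) = w" for w by (simp add: bij_is_surj surj_f_inv_f)
  have "x \<otimes> pw x k = ltrans m x (pw x k)" by (simp add: ltrans_def)
  also have "\<dots> = pw x (k + 1)" unfolding B A C ..
  finally show ?thesis .
qed

lemma pw_1[simp]: "pw x 1 = x" using pw_S[of x 0] by simp

lemma pw_D: "x \<setminus> pw x (k + 1) = pw x k" by (rule ld_eq) (rule pw_S)

lemma fixpow: assumes fi: "f \<in> inn m e" and fx: "f x = x" shows "f (pw x n) = pw x n"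
proof (induction n rule: int_induct[where k = 0])
  case base then show ?case using fi unfolding inn_def by simp
next
  case (step1 i) then show ?case using aut[OF fi, of x "pw x i"] fx by (simp add: pw_S)
next
  case (step2 i)
  have "pw x (i - 1) = x \<setminus> pw x i" using pw_D[of x "i - 1"] by simp
  then show ?case using aut_ld[OF fi, of x "pw x i"] fx step2 by simp
qed

lemma pw_iv: "iv x \<otimes> pw x (k + 1) = pw x k"
proof -
  have "(\<lambda>z. iv x \<otimes> (x \<otimes> z)) (pw x k) = pw x k"
    by (rule fixpow[OF M_inn]) (simp add: Mx)
  then show ?thesis by (simp add: pw_S)
qed

lemma mlt_funpow: "f \<in> mlt m \<Longrightarrow> f ^^ j \<in> mlt m"
  by (induction j) (auto intro: mlt.intros)

lemma shift_pow: assumes "\<And>n. a \<otimes> pw x n = pw x (n + d)"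
  shows "((\<lambda>z. a \<otimes> z) ^^ j) (pw x n) = pw x (n + d * int j)"
  by (induction j) (simp_all add: assms algebra_simps)

lemma shift_mult: assumes g: "g \<in> mlt m" and gs: "\<And>n. g (pw x n) = pw x (n + k)"
  shows "pw x k \<otimes> pw x n = pw x (k + n)"
proof -
  define f where "f = (\<lambda>z. pw x k \<setminus> g z)"
  have ge: "g e = pw x k" using gs[of 0] by simp
  have fi: "f \<in> inn m e" unfolding f_def
    by (rule innI, rule mltC[OF mltD g]) (simp add: ge)
  have "pw x k \<otimes> x = pw x (1 + k)" using pw_S[of x k] comm by (simp add: add.commute)
  then have fx: "f x = x" unfolding f_def using gs[of 1] by (metis ld2 pw_1)
  have "f (pw x n) = pw x n" by (rule fixpow[OF fi fx])
  then have "pw x k \<setminus> pw x (n + k) = pw x n" unfolding f_def gs .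
  then show ?thesis by (metis ld1 add.commute)
qed

lemma pw_mult: "pw x k \<otimes> pw x n = pw x (k + n)"
proof (cases "0 \<le> k")
  case True
  show ?thesis
  proof (rule shift_mult)
    show "(\<lambda>z. x \<otimes> z) ^^ nat k \<in> mlt m" by (rule mlt_funpow[OF mltL])
    have "((\<lambda>z. x \<otimes> z) ^^ nat k) (pw x n) = pw x (n + 1 * int (nat k))" for n
      by (rule shift_pow) (rule pw_S)
    then show "((\<lambda>z. x \<otimes> z) ^^ nat k) (pw x n) = pw x (n + k)" for n
      using True by simp
  qed
next
  case False
  show ?thesis
  proof (rule shift_mult)
    show "(\<lambda>z. iv x \<otimes> z) ^^ nat (- k) \<in> mlt m" by (rule mlt_funpow[OF mltL])
    have "iv x \<otimes> pw x n = pw x (n + -1)" for n using pw_iv[of x "n - 1"] by simp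
    then have "((\<lambda>z. iv x \<otimes> z) ^^ nat (- k)) (pw x n) = pw x (n + -1 * int (nat (- k)))" for n
      by (rule shift_pow)
    then show "((\<lambda>z. iv x \<otimes> z) ^^ nat (- k)) (pw x n) = pw x (n + k)" for n
      using False by simp
  qed
qed

lemma co_pw: "co x (pw x k) = pw x (k + 1)"
proof (rule co_eq)
  have a: "pw x k \<otimes> pw x k = pw x (2 * k)" unfolding mult_2 by (rule pw_mult)
  have b: "iv x \<setminus> pw x (2 * k) = pw x (2 * k + 1)" by (rule ld_eq) (rule pw_iv)
  have c: "x \<otimes> pw x (2 * k + 1) = pw x (2 * k + 2)" using pw_S[of x "2 * k + 1"]
    by (simp add: add.assoc)
  have d: "pw x (k + 1) \<otimes> pw x (k + 1) = pw x (2 * k + 2)"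
  proof -
    have "k + 1 + (k + 1) = 2 * k + 2" by simp
    then show ?thesis using pw_mult[of x "k + 1" "k + 1"] by simp
  qed
  show "pw x (k + 1) \<otimes> pw x (k + 1) = P x (pw x k \<otimes> pw x k)"
    unfolding d P_def a b c ..
qed

lemma co_lpow: "lpow m e x n = lpow (circ_op m e) e x n"
proof -
  have "bij (ltrans (circ_op m e) x)" using co_bijL[of x] unfolding ltrans_def .
  moreover have "ltrans (circ_op m e) x (pw x k) = pw x (k + 1)" for k
    unfolding ltrans_def by (rule co_pw)
  ultimately show ?thesis unfolding lpow_def[of "circ_op m e"]
    by (subst lpow_char[where g = "pw x"]) simp_all
qed

end

theorem lemma3p5:
  fixes m :: "'a \<Rightarrow> 'a \<Rightarrow> 'a" and e :: 'a
  assumes "commutative_A_loop m e"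
    and "uniquely_2_divisible m"
  shows "left_bruck_loop (circ_op m e) e
     \<and> (\<forall>x (n::int). lpow m e x n = lpow (circ_op m e) e x n)"
proof -
  interpret cal m e using assms by (rule cal.intro)
  show ?thesis using co_bruck co_lpow by blast
qed

end
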